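(* Let $\eta,\lambda>0$ with $\eta\lambda\le\tfrac12$, $x(0)\neq0$, and $x(t+1)=(1-\eta\lambda)x(t)-\eta\nabla L(x(t))$. Let $$I=\{T'\in\mathbb{N}: \forall\,0\le t\le T',\ \|x(t)\|_2^2\le\pi^2\rho\eta\ \text{ and }\ \|\nabla L(\bar x(t))\|_2^2>8\pi^4\rho^2\lambda\eta\}.$$ Suppose $0\in I$. Then $I$ is finite, and with $T:=\max I$ we have $T\le\frac{1}{6\lambda\eta}$ and $$\|x(T+1)\|_2^2\le\frac{2(\pi^2\rho\eta)^2}{\|x(0)\|_2^2}.$$
   Context: $L:\mathbb{R}^d\setminus\{0\}\to\mathbb{R}$ is $C^2$ and scale invariant, i.e. $L(cx)=L(x)$ for all $c>0$, $x\ne0$. $\rho:=\max_{\|x\|_2=1}\|\nabla^2L(x)\|_2>0$ (spectral norm). For $x\neq0$, $\bar x:=x/\|x\|_2$. *)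

theory Defs
  imports "HOL-Analysis.Analysis"
begin

end

theory Submission
  imports Defs
begin


lemma taylor_lb:
  fixes f f' f'' :: "real \<Rightarrow> real"
  assumes d1: "\<And>s. (f has_real_derivative f' s) (at s)"
    and d2: "\<And>s. (f' has_real_derivative f'' s) (at s)"
    and lb: "\<And>s. f'' s \<ge> -r" and a: "a \<ge> 0"
  shows "f a \<ge> f 0 + a * f' 0 - r * a^2/2"
proof -
  have k: "f' s - f' 0 + r * s \<ge> 0" if hs: "s \<ge> 0" for s
  proof -
    have "(\<lambda>s. f' s + r * s) 0 \<le> (\<lambda>s. f' s + r * s) s"
    proof (rule DERIV_nonneg_imp_nondecreasing[OF hs])
      fix x assume "0 \<le> x" "x \<le> s"
      have "((\<lambda>s. f' s + r * s) has_real_derivative f'' x + r) (at x)"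
        using d2[of x] by (auto intro!: derivative_eq_intros)
      then show "\<exists>y. ((\<lambda>s. f' s + r * s) has_real_derivative y) (at x) \<and> 0 \<le> y"
        using lb[of x] by (intro exI[of _ "f'' x + r"]) auto
    qed
    then show ?thesis by simp
  qed
  have "(\<lambda>s. f s - s * f' 0 + r * s^2/2) 0 \<le> (\<lambda>s. f s - s * f' 0 + r * s^2/2) a"
  proof (rule DERIV_nonneg_imp_nondecreasing[OF a])
    fix x assume x: "0 \<le> x" "x \<le> a"
    have "((\<lambda>s. f s - s * f' 0 + r * s^2/2) has_real_derivative f' x - f' 0 + r * x) (at x)"
      using d1[of x] by (auto intro!: derivative_eq_intros)
    then show "\<exists>y. ((\<lambda>s. f s - s * f' 0 + r * s^2/2) has_real_derivative y) (at x) \<and> 0 \<le> y"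
      using k[OF x(1)] by (intro exI[of _ "f' x - f' 0 + r * x"]) auto
  qed
  then show ?thesis by simp
qed

lemma orth:
  fixes L :: "'a::euclidean_space \<Rightarrow> real" and gradL :: "'a \<Rightarrow> 'a"
  assumes grad: "\<And>z. z \<noteq> 0 \<Longrightarrow> (L has_derivative (\<lambda>h. gradL z \<bullet> h)) (at z)"
    and scale_inv: "\<And>c z. c > 0 \<Longrightarrow> z \<noteq> 0 \<Longrightarrow> L (c *\<^sub>R z) = L z"
    and z: "z \<noteq> 0"
  shows "gradL z \<bullet> z = 0"
proof -
  have d: "((\<lambda>c. L (c *\<^sub>R z)) has_derivative (\<lambda>h. gradL z \<bullet> (h *\<^sub>R z))) (at 1)"
  proof -
    have "((\<lambda>c. c *\<^sub>R z) has_derivative (\<lambda>h. h *\<^sub>R z)) (at 1)" by (auto intro!: derivative_eq_intros)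
    moreover have "(L has_derivative (\<lambda>h. gradL z \<bullet> h)) (at ((\<lambda>c. c *\<^sub>R z) 1))" using grad[OF z] by simp
    ultimately show ?thesis by (rule has_derivative_compose)
  qed
  have "((\<lambda>c. L z) has_derivative (\<lambda>h. gradL z \<bullet> (h *\<^sub>R z))) (at 1)"
    by (rule has_derivative_transform_within_open[OF d, of "{0<..}"]) (auto simp: scale_inv z)
  moreover have "((\<lambda>c::real. L z) has_derivative (\<lambda>h. 0)) (at 1)" by simp
  ultimately have "(\<lambda>h. gradL z \<bullet> (h *\<^sub>R z)) = (\<lambda>h. 0)" by (rule has_derivative_unique)
  then show ?thesis by (metis scaleR_one)
qed

lemma homog:
  fixes L :: "'a::euclidean_space \<Rightarrow> real" and gradL :: "'a \<Rightarrow> 'a"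
  assumes grad: "\<And>z. z \<noteq> 0 \<Longrightarrow> (L has_derivative (\<lambda>h. gradL z \<bullet> h)) (at z)"
    and scale_inv: "\<And>c z. c > 0 \<Longrightarrow> z \<noteq> 0 \<Longrightarrow> L (c *\<^sub>R z) = L z"
    and z: "z \<noteq> 0" and c: "c > 0"
  shows "gradL (c *\<^sub>R z) = (1/c) *\<^sub>R gradL z"
proof -
  have cz: "c *\<^sub>R z \<noteq> 0" using z c by simp
  have d: "((\<lambda>y. L (c *\<^sub>R y)) has_derivative (\<lambda>h. gradL (c *\<^sub>R z) \<bullet> (c *\<^sub>R h))) (at z)"
  proof -
    have "((\<lambda>y. c *\<^sub>R y) has_derivative (\<lambda>h. c *\<^sub>R h)) (at z)" by (auto intro!: derivative_eq_intros)
    from has_derivative_compose[OF this grad[OF cz]] show ?thesis by simp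
  qed
  have "(L has_derivative (\<lambda>h. gradL (c *\<^sub>R z) \<bullet> (c *\<^sub>R h))) (at z)"
    by (rule has_derivative_transform_within_open[OF d, of "UNIV - {0}"]) (auto simp: scale_inv c z)
  from has_derivative_unique[OF this grad[OF z]]
  have e: "\<And>h. gradL (c *\<^sub>R z) \<bullet> (c *\<^sub>R h) = gradL z \<bullet> h" by metis
  have "(c *\<^sub>R gradL (c *\<^sub>R z) - gradL z) \<bullet> h = 0" for h
    using e[of h] by (simp add: inner_diff_left algebra_simps)
  then have "c *\<^sub>R gradL (c *\<^sub>R z) - gradL z = 0" by (metis inner_eq_zero_iff)
  then have "(1/c) *\<^sub>R (c *\<^sub>R gradL (c *\<^sub>R z)) = (1/c) *\<^sub>R gradL z" by simp
  then show ?thesis using c by simp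
qed

lemma scl: fixes w :: "'a::real_normed_vector"
  assumes "(f has_real_derivative D) (at s)"
  shows "((\<lambda>x. f x *\<^sub>R w) has_derivative (\<lambda>x. (x * D) *\<^sub>R w)) (at s)"
  using has_derivative_scaleR[OF assms[unfolded has_field_derivative_def] has_derivative_const[of w]]
  by (simp add: mult.commute)

lemma curve:
  fixes L :: "'a::euclidean_space \<Rightarrow> real" and gradL :: "'a \<Rightarrow> 'a"
    and H :: "'a \<Rightarrow> ('a \<Rightarrow>\<^sub>L 'a)"
  assumes grad: "\<And>z. z \<noteq> 0 \<Longrightarrow> (L has_derivative (\<lambda>h. gradL z \<bullet> h)) (at z)"
    and hess: "\<And>z. z \<noteq> 0 \<Longrightarrow> (gradL has_derivative blinfun_apply (H z)) (at z)"
    and scale_inv: "\<And>c z. c > 0 \<Longrightarrow> z \<noteq> 0 \<Longrightarrow> L (c *\<^sub>R z) = L z"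
    and rho_ub: "\<And>z. z \<in> sphere 0 1 \<Longrightarrow> norm (H z) \<le> \<rho>"
    and u: "norm u = 1" and w: "norm w = 1" and uw: "u \<bullet> w = 0"
  shows "L (-u) \<ge> L u + pi * (gradL u \<bullet> w) - \<rho> * pi^2/2"
    and "L (-u) \<le> L u + pi * (gradL u \<bullet> w) + \<rho> * pi^2/2"
proof -
  define \<gamma> where "\<gamma> s = cos s *\<^sub>R u + sin s *\<^sub>R w" for s
  define \<gamma>' where "\<gamma>' s = (- sin s) *\<^sub>R u + cos s *\<^sub>R w" for s
  have uu: "u \<bullet> u = 1" using u by (simp add: norm_eq_1)
  have ww: "w \<bullet> w = 1" using w by (simp add: norm_eq_1)
  have wu: "w \<bullet> u = 0" using uw by (simp add: inner_commute)
  have ng: "norm (\<gamma> s) = 1" for s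
  proof -
    have "\<gamma> s \<bullet> \<gamma> s = (cos s)^2 + (sin s)^2"
      by (simp add: \<gamma>_def inner_add_left inner_add_right uu ww uw wu power2_eq_square)
    then show ?thesis by (simp add: norm_eq_1)
  qed
  have ng': "norm (\<gamma>' s) = 1" for s
  proof -
    have "\<gamma>' s \<bullet> \<gamma>' s = (cos s)^2 + (sin s)^2"
      by (simp add: \<gamma>'_def inner_add_left inner_add_right inner_diff_left inner_diff_right uu ww uw wu power2_eq_square)
    then show ?thesis by (simp add: norm_eq_1)
  qed
  have nz: "\<gamma> s \<noteq> 0" for s using ng[of s] by auto
  have dg: "(\<gamma> has_derivative (\<lambda>t. t *\<^sub>R \<gamma>' s)) (at s)" for s
    unfolding \<gamma>_def \<gamma>'_def
    by (rule has_derivative_eq_rhs[OF has_derivative_add[OF scl[OF DERIV_cos] scl[OF DERIV_sin]]]) (auto simp: fun_eq_iff algebra_simps)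
  have dg': "(\<gamma>' has_derivative (\<lambda>t. t *\<^sub>R (- \<gamma> s))) (at s)" for s
    unfolding \<gamma>_def \<gamma>'_def
    by (rule has_derivative_eq_rhs[OF has_derivative_add[OF scl[OF DERIV_minus[OF DERIV_sin]] scl[OF DERIV_cos]]]) (auto simp: fun_eq_iff algebra_simps)
  have df: "((\<lambda>s. L (\<gamma> s)) has_real_derivative (gradL (\<gamma> s) \<bullet> \<gamma>' s)) (at s)" for s
  proof -
    have "((\<lambda>s. L (\<gamma> s)) has_derivative (\<lambda>t. gradL (\<gamma> s) \<bullet> (t *\<^sub>R \<gamma>' s))) (at s)"
      by (rule has_derivative_compose[OF dg grad[OF nz]])
    then show ?thesis unfolding has_field_derivative_def
      by (rule has_derivative_eq_rhs) (auto simp: fun_eq_iff)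
  qed
  have dgr: "((\<lambda>s. gradL (\<gamma> s)) has_derivative (\<lambda>t. H (\<gamma> s) (t *\<^sub>R \<gamma>' s))) (at s)" for s
    by (rule has_derivative_compose[OF dg hess[OF nz]])
  have orth': "gradL (\<gamma> s) \<bullet> \<gamma> s = 0" for s by (rule orth[OF grad scale_inv nz])
  have df': "((\<lambda>s. gradL (\<gamma> s) \<bullet> \<gamma>' s) has_real_derivative (H (\<gamma> s) (\<gamma>' s) \<bullet> \<gamma>' s)) (at s)" for s
  proof -
    have "((\<lambda>s. gradL (\<gamma> s) \<bullet> \<gamma>' s) has_derivative
          (\<lambda>h. gradL (\<gamma> s) \<bullet> (h *\<^sub>R (- \<gamma> s)) + H (\<gamma> s) (h *\<^sub>R \<gamma>' s) \<bullet> \<gamma>' s)) (at s)"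
      by (rule has_derivative_inner[OF dgr dg'])
    then show ?thesis unfolding has_field_derivative_def
      by (rule has_derivative_eq_rhs) (auto simp: fun_eq_iff blinfun.scaleR_right orth')
  qed
  have bnd: "\<bar>H (\<gamma> s) (\<gamma>' s) \<bullet> \<gamma>' s\<bar> \<le> \<rho>" for s
  proof -
    have "\<bar>H (\<gamma> s) (\<gamma>' s) \<bullet> \<gamma>' s\<bar> \<le> norm (H (\<gamma> s) (\<gamma>' s)) * norm (\<gamma>' s)"
      by (rule Cauchy_Schwarz_ineq2)
    also have "\<dots> \<le> norm (H (\<gamma> s)) * norm (\<gamma>' s) * norm (\<gamma>' s)"
      by (rule mult_right_mono[OF norm_blinfun]) simp
    also have "\<dots> \<le> \<rho>" using rho_ub[of "\<gamma> s"] ng[of s] ng'[of s] by simp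
    finally show ?thesis .
  qed
  have g0: "\<gamma> 0 = u" and gpi: "\<gamma> pi = - u" and g'0: "\<gamma>' 0 = w" by (auto simp: \<gamma>_def \<gamma>'_def)
  have "L (\<gamma> pi) \<ge> L (\<gamma> 0) + pi * (gradL (\<gamma> 0) \<bullet> \<gamma>' 0) - \<rho> * pi^2/2"
    by (rule taylor_lb[where f="\<lambda>s. L (\<gamma> s)", OF df df']) (auto intro: pi_ge_zero, metis abs_le_iff bnd minus_le_iff)
  then show "L (-u) \<ge> L u + pi * (gradL u \<bullet> w) - \<rho> * pi^2/2" by (simp add: g0 gpi g'0)
  have "- L (\<gamma> pi) \<ge> - L (\<gamma> 0) + pi * (- (gradL (\<gamma> 0) \<bullet> \<gamma>' 0)) - \<rho> * pi^2/2"
    by (rule taylor_lb[where f="\<lambda>s. - L (\<gamma> s)"],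
        (rule derivative_eq_intros df df' | simp)+) (auto intro: pi_ge_zero, metis abs_le_iff bnd minus_le_iff)
  then show "L (-u) \<le> L u + pi * (gradL u \<bullet> w) + \<rho> * pi^2/2" by (simp add: g0 gpi g'0)
qed

lemma gradbound:
  fixes L :: "'a::euclidean_space \<Rightarrow> real" and gradL :: "'a \<Rightarrow> 'a"
    and H :: "'a \<Rightarrow> ('a \<Rightarrow>\<^sub>L 'a)"
  assumes grad: "\<And>z. z \<noteq> 0 \<Longrightarrow> (L has_derivative (\<lambda>h. gradL z \<bullet> h)) (at z)"
    and hess: "\<And>z. z \<noteq> 0 \<Longrightarrow> (gradL has_derivative blinfun_apply (H z)) (at z)"
    and scale_inv: "\<And>c z. c > 0 \<Longrightarrow> z \<noteq> 0 \<Longrightarrow> L (c *\<^sub>R z) = L z"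
    and rho_ub: "\<And>z. z \<in> sphere 0 1 \<Longrightarrow> norm (H z) \<le> \<rho>"
    and u: "norm u = 1"
  shows "norm (gradL u) \<le> pi * \<rho> / 2"
proof (cases "gradL u = 0")
  case True
  have "norm (H u) \<le> \<rho>" using rho_ub[of u] u by simp
  then have "0 \<le> \<rho>" by (meson norm_ge_zero order_trans)
  then show ?thesis using True by simp
next
  case False
  define G where "G = norm (gradL u)"
  have G: "G > 0" using False by (simp add: G_def)
  define v where "v = (1/G) *\<^sub>R gradL u"
  have nv: "norm v = 1" using G by (simp add: v_def G_def)
  have u0: "u \<noteq> 0" using u by auto
  have uv: "u \<bullet> v = 0" using orth[OF grad scale_inv u0] by (simp add: v_def inner_commute)
  have gv: "gradL u \<bullet> v = G" using G by (simp add: v_def G_def dot_square_norm power2_eq_square)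
  have nmv: "norm (-v) = 1" using nv by simp
  have umv: "u \<bullet> (-v) = 0" using uv by simp
  have c1: "L (-u) \<ge> L u + pi * G - \<rho> * pi^2/2"
    using curve(1)[OF grad hess scale_inv rho_ub u nv uv] gv by simp
  have c2: "L (-u) \<le> L u + pi * (- G) + \<rho> * pi^2/2"
    using curve(2)[OF grad hess scale_inv rho_ub u nmv umv] gv by simp
  have "2 * pi * G \<le> \<rho> * pi^2" using c1 c2 by linarith
  then have "2 * G \<le> \<rho> * pi" by (simp add: power2_eq_square)
  then show ?thesis by (simp add: G_def mult.commute)
qed


theorem mainTheorem11:
  fixes L :: "'a::euclidean_space \<Rightarrow> real"
    and gradL :: "'a \<Rightarrow> 'a"
    and H :: "'a \<Rightarrow> ('a \<Rightarrow>\<^sub>L 'a)"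
    and \<rho> \<eta> lam :: real
    and x :: "nat \<Rightarrow> 'a"
  assumes grad: "\<And>z. z \<noteq> 0 \<Longrightarrow> (L has_derivative (\<lambda>h. gradL z \<bullet> h)) (at z)"
    and hess: "\<And>z. z \<noteq> 0 \<Longrightarrow> (gradL has_derivative blinfun_apply (H z)) (at z)"
    and hess_cont: "continuous_on (UNIV - {0}) H"
    and scale_inv: "\<And>c z. c > 0 \<Longrightarrow> z \<noteq> 0 \<Longrightarrow> L (c *\<^sub>R z) = L z"
    and rho_max: "\<exists>z\<in>sphere 0 1. norm (H z) = \<rho>"
    and rho_ub: "\<And>z. z \<in> sphere 0 1 \<Longrightarrow> norm (H z) \<le> \<rho>"
    and rho_pos: "\<rho> > 0"
    and eta_pos: "\<eta> > 0" and lambda_pos: "lam > 0"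
    and step_small: "\<eta> * lam \<le> 1/2"
    and x0: "x 0 \<noteq> 0"
    and iter: "\<And>t. x (Suc t) = (1 - \<eta> * lam) *\<^sub>R x t - \<eta> *\<^sub>R gradL (x t)"
    and zero_in: "0 \<in> {T'::nat. \<forall>t\<le>T'. norm (x t) ^ 2 \<le> pi^2 * \<rho> * \<eta>
                     \<and> norm (gradL ((1 / norm (x t)) *\<^sub>R x t)) ^ 2 > 8 * pi^4 * \<rho>^2 * lam * \<eta>}"
  shows "let I = {T'::nat. \<forall>t\<le>T'. norm (x t) ^ 2 \<le> pi^2 * \<rho> * \<eta>
                     \<and> norm (gradL ((1 / norm (x t)) *\<^sub>R x t)) ^ 2 > 8 * pi^4 * \<rho>^2 * lam * \<eta>};
             T = Max I
         in finite I \<and> real T \<le> 1 / (6 * lam * \<eta>)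
            \<and> norm (x (T + 1)) ^ 2 \<le> 2 * (pi^2 * \<rho> * \<eta>)^2 / norm (x 0) ^ 2"
  proof -
  define B where "B = pi^2 * \<rho> * \<eta>"
  define C where "C = 8 * pi^4 * \<rho>^2 * lam * \<eta>"
  define D where "D = 6 * pi^2 * \<rho> * lam * \<eta>^2"
  define n where "n t = norm (x t) ^ 2" for t
  define g where "g t = norm (gradL ((1 / norm (x t)) *\<^sub>R x t)) ^ 2" for t
  define I where "I = {T'::nat. \<forall>t\<le>T'. norm (x t) ^ 2 \<le> pi^2 * \<rho> * \<eta>
                     \<and> norm (gradL ((1 / norm (x t)) *\<^sub>R x t)) ^ 2 > 8 * pi^4 * \<rho>^2 * lam * \<eta>}"
  have I_alt: "I = {T'. \<forall>t\<le>T'. n t \<le> B \<and> g t > C}" by (simp add: I_def n_def g_def B_def C_def)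
  define a where "a = 1 - \<eta> * lam"
  have a_lb: "a \<ge> 1/2" and a_le: "a \<le> 1" using step_small eta_pos lambda_pos by (auto simp: a_def)
  have rec: "n (Suc t) = a^2 * n t + \<eta>^2 * g t / n t" if xt: "x t \<noteq> 0" for t
  proof -
    let ?X = "x t" and ?G = "gradL (x t)"
    have o: "?X \<bullet> ?G = 0" using orth[OF grad scale_inv xt] by (simp add: inner_commute)
    have nX: "norm ?X > 0" using xt by simp
    have h: "gradL ((1 / norm ?X) *\<^sub>R ?X) = norm ?X *\<^sub>R ?G"
      using homog[OF grad scale_inv xt, of "1 / norm ?X"] nX by simp
    have gt: "g t = norm ?X ^ 2 * norm ?G ^ 2" by (simp add: g_def h power_mult_distrib)
    have "n (Suc t) = (a *\<^sub>R ?X - \<eta> *\<^sub>R ?G) \<bullet> (a *\<^sub>R ?X - \<eta> *\<^sub>R ?G)"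
      by (simp add: n_def iter a_def dot_square_norm)
    also have "\<dots> = a^2 * (?X \<bullet> ?X) + \<eta>^2 * (?G \<bullet> ?G)"
      using o by (simp add: inner_diff_left inner_diff_right inner_commute power2_eq_square)
    also have "\<dots> = a^2 * n t + \<eta>^2 * g t / n t"
      using nX by (simp add: gt n_def dot_square_norm)
    finally show ?thesis .
  qed
  have nz: "x t \<noteq> 0" for t
  proof (induction t)
    case 0 then show ?case using x0 by simp
  next
    case (Suc t)
    have "n t > 0" using Suc by (simp add: n_def)
    moreover have "g t \<ge> 0" by (simp add: g_def)
    ultimately have p1: "a^2 * n t > 0" and p2: "\<eta>^2 * g t / n t \<ge> 0" using a_lb by auto
    have "n (Suc t) > 0" using rec[OF Suc] p1 p2 by linarith
    then show ?case by (auto simp: n_def)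
  qed
  have npos: "n t > 0" for t using nz[of t] by (simp add: n_def)
  have gb: "g t \<le> (pi * \<rho> / 2)^2" for t
  proof -
    have nu: "norm ((1 / norm (x t)) *\<^sub>R x t) = 1" using nz[of t] by simp
    have gt: "norm (gradL ((1 / norm (x t)) *\<^sub>R x t)) \<le> pi * \<rho> / 2"
      by (rule gradbound[of L gradL H \<rho>, OF _ _ _ _ nu]) (fact grad hess scale_inv rho_ub)+
    show ?thesis unfolding g_def by (rule power_mono[OF gt norm_ge_zero])
  qed
  have Bpos: "B > 0" using rho_pos eta_pos by (simp add: B_def)
  have Cpos: "C > 0" using rho_pos eta_pos lambda_pos by (simp add: C_def)
  have CB: "\<eta>^2 * C / B = 8 * pi^2 * \<rho> * lam * \<eta>^2"
    using rho_pos eta_pos by (simp add: B_def C_def field_simps power2_eq_square power4_eq_xxxx)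
  have step: "n (Suc t) \<ge> n t + D" if h1: "n t \<le> B" and h2: "g t > C" for t
  proof -
    have a2: "a^2 \<ge> 1 - 2 * \<eta> * lam" using eta_pos by (simp add: a_def power2_eq_square algebra_simps)
    have "g t / n t \<ge> C / B" using h1 h2 npos[of t] Cpos
      by (intro frac_le) auto
    then have t2: "\<eta>^2 * g t / n t \<ge> \<eta>^2 * C / B"
      by (metis mult_left_mono times_divide_eq_right zero_le_power2)
    define K where "K = pi^2 * \<rho> * lam * \<eta>^2"
    have t1: "a^2 * n t \<ge> n t - 2 * \<eta> * lam * n t"
      using mult_right_mono[OF a2, of "n t"] npos[of t] by (simp add: algebra_simps)
    have t3: "2 * \<eta> * lam * n t \<le> 2 * \<eta> * lam * B"
      using h1 eta_pos lambda_pos by simp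
    have e: "2 * \<eta> * lam * B = 2 * K" by (simp add: K_def B_def power2_eq_square)
    have CB': "\<eta>^2 * C / B = 8 * K" using CB by (simp add: K_def)
    have DK: "D = 6 * K" by (simp add: K_def D_def)
    have r: "n (Suc t) = a^2 * n t + \<eta>^2 * g t / n t" by (rule rec[OF nz[of t]])
    show ?thesis using r t1 t2 t3 e CB' DK by linarith
  qed
  have growth: "n t \<ge> n 0 + real t * D" if "T' \<in> I" "t \<le> T'" for T' t
    using that(2)
  proof (induction t)
    case 0 then show ?case by simp
  next
    case (Suc t)
    then have "n t \<ge> n 0 + real t * D" by simp
    moreover have "n t \<le> B" "g t > C" using that(1) Suc.prems by (auto simp: I_alt)
    ultimately show ?case using step[of t] by (simp add: algebra_simps)
  qed
  have Dpos: "D > 0" using rho_pos eta_pos lambda_pos by (simp add: D_def)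
  have bnd: "real T' \<le> 1 / (6 * lam * \<eta>)" if "T' \<in> I" for T'
  proof -
    have "n T' \<le> B" using that by (auto simp: I_alt)
    then have "real T' * D \<le> B" using growth[OF that order_refl] npos[of 0] by linarith
    then have "real T' \<le> B / D" using Dpos by (simp add: pos_le_divide_eq)
    also have "B / D = 1 / (6 * lam * \<eta>)" using rho_pos eta_pos lambda_pos
      by (simp add: B_def D_def field_simps power2_eq_square)
    finally show ?thesis .
  qed
  have fin: "finite I"
  proof (rule finite_subset)
    show "I \<subseteq> {..nat \<lceil>1 / (6 * lam * \<eta>)\<rceil>}"
    proof
      fix T' assume "T' \<in> I"
      from bnd[OF this] show "T' \<in> {..nat \<lceil>1 / (6 * lam * \<eta>)\<rceil>}"
        by (simp add: le_nat_iff) linarith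
    qed
  qed simp
  have I0: "0 \<in> I" using zero_in by (simp add: I_def)
  define T where "T = Max I"
  have TI: "T \<in> I" unfolding T_def using fin I0 by (intro Max_in) auto
  have nT: "n T \<le> B" using TI by (auto simp: I_alt)
  have nT0: "n T \<ge> n 0" using growth[OF TI order_refl] Dpos
    by (smt (verit) mult_nonneg_nonneg of_nat_0_le_iff)
  have n0B: "n 0 \<le> B" using I0 by (auto simp: I_alt)
  have fin_bound: "n (T + 1) \<le> 2 * B^2 / n 0"
  proof -
    have f1: "n (T+1) = a^2 * n T + \<eta>^2 * g T / n T" using rec[OF nz[of T]] by simp
    have f2: "a^2 * n T \<le> n T" using a_lb a_le npos[of T]
      by (simp add: mult_left_le_one_le power_le_one)
    have f3: "\<eta>^2 * g T / n T \<le> \<eta>^2 * (pi * \<rho> / 2)^2 / n 0"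
      by (rule frac_le) (use gb[of T] nT0 npos[of 0] in \<open>auto intro: mult_left_mono\<close>)
    have "\<eta>^2 * (pi * \<rho> / 2)^2 \<le> B^2"
    proof -
      have p1: "1 \<le> pi^2" by (rule one_le_power) (use pi_gt3 in linarith)
      have p2: "pi^2 \<le> pi^2 * pi^2" using mult_left_mono[OF p1, of "pi^2"] by simp
      have p3: "pi^4 = pi^2 * pi^2" by (simp add: power4_eq_xxxx power2_eq_square)
      have "pi^2 / 4 \<le> pi^4" using p1 p2 p3 by linarith
      then have ineq: "\<eta>^2 * \<rho>^2 * (pi^2 / 4) \<le> \<eta>^2 * \<rho>^2 * pi^4"
        by (rule mult_left_mono) simp_all
      have eq1: "\<eta>^2 * (pi * \<rho> / 2)^2 = \<eta>^2 * \<rho>^2 * (pi^2 / 4)"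
        by (simp add: power_mult_distrib power_divide mult_ac)
      have eq2: "B^2 = \<eta>^2 * \<rho>^2 * pi^4"
        by (simp add: B_def power2_eq_square power4_eq_xxxx mult_ac)
      show ?thesis unfolding eq1 eq2 by (rule ineq)
    qed
    then have f4: "\<eta>^2 * (pi * \<rho> / 2)^2 / n 0 \<le> B^2 / n 0" using npos[of 0] by (simp add: divide_right_mono)
    have f5: "B \<le> B^2 / n 0" using npos[of 0] n0B Bpos
      by (simp add: pos_le_divide_eq power2_eq_square mult_left_mono)
    have f6: "2 * B^2 / n 0 = B^2 / n 0 + B^2 / n 0" by simp
    show ?thesis using f1 f2 f3 f4 f5 f6 nT by linarith
  qed
  show ?thesis
    unfolding Let_def I_def[symmetric] T_def[symmetric]
    using fin bnd[OF TI] fin_bound by (simp add: n_def B_def)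
qed

end
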